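(* Let $n\ge 3$ and consider the cycle graph on nodes $1,\dots,n$ with arbitrary measurements $\widetilde{R}_{12},\dots,\widetilde{R}_{n-1,n},\widetilde{R}_{n1}\in\mathrm{SO}(3)$. For each $k\in\{0,\dots,n-1\}$, the point $R=(R_1,\dots,R_n)$ with $R_1=I_3$ and $$R_i=\Big(\prod_{s=1}^{i-1}\widetilde{R}_{s,s+1}\Big)^{\top}E_k^{\,i-1},\qquad i\in\{2,\dots,n\},$$ is a stationary point of $f$ on $\mathrm{SO}(3)^n$, and at this point $f(R)=-3n-2n\operatorname{Tr}(E_k)=-3n-2n\big(1+2\cos(\gamma/n-2k\pi/n)\big)$.
   Context: Cycle-graph rotation averaging setup. Let $n\ge 3$. The cycle graph has nodes $1,\dots,n$ and edges $\{i,i+1\}$ for $i=1,\dots,n-1$ together with $\{n,1\}$; write $i\sim j$ if $\{i,j\}$ is an edge. Each edge carries a measured rotation $\widetilde{R}_{ij}\in\mathrm{SO}(3)$, with the convention $\widetilde{R}_{ji}=\widetilde{R}_{ij}^\top$. Define the symmetric $3n\times 3n$ block matrix $\widetilde{R}$ whose $(i,j)$ $3\times3$ block is $I_3$ if $i=j$, $\widetilde{R}_{ij}$ if $i\sim j$, and $0$ otherwise. For $R=(R_1,\dots,R_n)\in\mathrm{SO}(3)^n$, write $R=[R_1^\top\ \cdots\ R_n^\top]^\top\in\mathbb{R}^{3n\times 3}$ and define $f(R):=-\operatorname{Tr}(R^\top\widetilde{R}R)$; the rotation averaging problem is to minimize $f$ over $\mathrm{SO}(3)^n$. The cycle error is $E:=\widetilde{R}_{12}\widetilde{R}_{23}\cdots\widetilde{R}_{n-1,n}\widetilde{R}_{n1}\in\mathrm{SO}(3)$.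 Write $E=\exp(\gamma[\hat n]_\times)$ with unit axis $\hat n$ and angle $\gamma=\angle(E)\in[-\pi,\pi]$. For $k\in\{0,\dots,n-1\}$, $E_k:=\exp\big((\gamma/n-2k\pi/n)[\hat n]_\times\big)$. *)

theory Defs
  imports "HOL-Analysis.Analysis"
begin

type_synonym mat3 = "real^3^3"

definition SO3 :: "mat3 set" where
  "SO3 = {R. transpose R ** R = mat 1 \<and> det R = 1}"

primrec mpow :: "mat3 \<Rightarrow> nat \<Rightarrow> mat3" where
  "mpow A 0 = mat 1"
| "mpow A (Suc k) = mpow A k ** A"

definition mexp :: "mat3 \<Rightarrow> mat3" where
  "mexp A = (\<Sum>k. (1 / fact k) *\<^sub>R mpow A k)"

definition hat :: "real^3 \<Rightarrow> mat3" where
  "hat v = vector [vector [0, - v$3, v$2],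
                   vector [v$3, 0, - v$1],
                   vector [- v$2, v$1, 0]]"

definition skew :: "mat3 \<Rightarrow> bool" where
  "skew A \<longleftrightarrow> transpose A = - A"

text \<open>Measurements on the cycle: M s = R~_{s,s+1} for 1 <= s <= n-1, and M n = R~_{n,1}.\<close>

definition lprod :: "(nat \<Rightarrow> mat3) \<Rightarrow> nat \<Rightarrow> mat3" where
  "lprod M i = foldl (\<lambda>A s. A ** M s) (mat 1) [1..<i]"

definition Rblock :: "nat \<Rightarrow> (nat \<Rightarrow> mat3) \<Rightarrow> nat \<Rightarrow> nat \<Rightarrow> mat3" where
  "Rblock n M i j =
     (if i = j then mat 1
      else if j = i + 1 then M i
      else if i = j + 1 then transpose (M j)
      else if i = n \<and> j = 1 then M n
      else if i = 1 \<and> j = n then transpose (M n)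
      else 0)"

text \<open>Objective f(R) = - Tr(R^T R~ R) = - sum_{i,j} Tr(R_i^T R~_{ij} R_j).\<close>
definition fcost :: "nat \<Rightarrow> (nat \<Rightarrow> mat3) \<Rightarrow> (nat \<Rightarrow> mat3) \<Rightarrow> real" where
  "fcost n M R = - (\<Sum>i\<in>{1..n}. \<Sum>j\<in>{1..n}. trace (transpose (R i) ** Rblock n M i j ** R j))"

text \<open>Cycle error E = R~_12 R~_23 ... R~_{n-1,n} R~_{n1}.\<close>
definition cycle_error :: "nat \<Rightarrow> (nat \<Rightarrow> mat3) \<Rightarrow> mat3" where
  "cycle_error n M = lprod M (n + 1)"

text \<open>Stationary point of f on SO(3)^n: R in SO(3)^n and the differential of the
  (ambient, smooth) function f vanishes on every tangent vector
  (R_1 Omega_1, ..., R_n Omega_n), Omega_i skew-symmetric.\<close>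
definition stationary :: "nat \<Rightarrow> (nat \<Rightarrow> mat3) \<Rightarrow> (nat \<Rightarrow> mat3) \<Rightarrow> bool" where
  "stationary n M R \<longleftrightarrow>
     (\<forall>i\<in>{1..n}. R i \<in> SO3) \<and>
     (\<forall>\<Omega>. (\<forall>i\<in>{1..n}. skew (\<Omega> i)) \<longrightarrow>
        ((\<lambda>t. fcost n M (\<lambda>i. R i + t *\<^sub>R (R i ** \<Omega> i))) has_real_derivative 0) (at 0))"

end

theory Submission
  imports Defs
begin


lemma mat_radd: "((A::real^'n^'m) + B) ** C = A ** C + B ** C"
  by (vector matrix_matrix_mult_def sum.distrib[symmetric] field_simps)
lemma transpose_add': "transpose ((A::real^'n^'m) + B) = transpose A + transpose B"
  by (simp add: transpose_def vec_eq_iff)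
lemma transpose_scaleR': "transpose (c *\<^sub>R (A::real^'n^'m)) = c *\<^sub>R transpose A"
  by (simp add: transpose_def vec_eq_iff)
lemma transpose_neg': "transpose (- (A::real^'n^'m)) = - transpose A"
  by (simp add: transpose_def vec_eq_iff)
lemma trace_transpose': "trace (transpose (A::real^'n^'n)) = trace A"
  by (simp add: trace_def transpose_def)
lemma trace_scaleR': "trace (c *\<^sub>R (A::real^'n^'n)) = c * trace A"
  by (simp add: trace_def sum_distrib_left)
lemma trace_neg': "trace (- (A::real^'n^'n)) = - trace A"
  by (simp add: trace_def sum_negf)
lemma trace_zero': "trace (0::real^'n^'n) = 0"
  by (simp add: trace_def)
lemma mat_neg_left: "(- (A::real^'n^'m)) ** B = - (A ** B)"
  by (simp add: matrix_matrix_mult_def vec_eq_iff sum_negf)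
lemma mat_neg_right: "(A::real^'n^'m) ** (- B) = - (A ** B)"
  by (simp add: matrix_matrix_mult_def vec_eq_iff sum_negf)
lemma mat_sc: "(x *\<^sub>R (A::real^'n^'m)) ** (y *\<^sub>R B) = (x * y) *\<^sub>R (A ** B)"
  by (simp add: matrix_matrix_mult_def vec_eq_iff sum_distrib_left mult_ac)
lemma mat_scl: "(x *\<^sub>R (A::real^'n^'m)) ** B = x *\<^sub>R (A ** B)"
  by (simp add: matrix_matrix_mult_def vec_eq_iff sum_distrib_left mult_ac)
lemma mat_scr: "(A::real^'n^'m) ** (y *\<^sub>R B) = y *\<^sub>R (A ** B)"
  by (simp add: matrix_matrix_mult_def vec_eq_iff sum_distrib_left mult_ac)

lemma norm_unit3: "norm (v::real^3) = 1 \<Longrightarrow> v$1 * v$1 + v$2 * v$2 + v$3 * v$3 = 1"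
  using power2_norm_eq_inner[of v] by (simp add: inner_vec_def sum_3)

lemma hat_cube: assumes "norm (v::real^3) = 1"
  shows "hat v ** hat v ** hat v = - hat v"
proof -
  have h: "v$1 * v$1 + v$2 * v$2 + v$3 * v$3 = 1" using norm_unit3[OF assms] .
  show ?thesis
    unfolding vec_eq_iff forall_3
    using h by (simp add: hat_def matrix_matrix_mult_def sum_3 algebra_simps; algebra)
qed

lemma hat_skew: "transpose (hat v) = - hat v"
  unfolding vec_eq_iff forall_3 by (simp add: hat_def transpose_def)

lemma trace_hat: "trace (hat v) = 0"
  by (simp add: hat_def trace_def sum_3)

lemma trace_hat2: assumes "norm (v::real^3) = 1" shows "trace (hat v ** hat v) = -2"
proof -
  have h: "v$1 * v$1 + v$2 * v$2 + v$3 * v$3 = 1" using norm_unit3[OF assms] .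
  show ?thesis using h by (simp add: hat_def trace_def sum_3 matrix_matrix_mult_def; algebra)
qed


definition lin :: "mat3 \<Rightarrow> real \<Rightarrow> real \<Rightarrow> real \<Rightarrow> mat3" where
  "lin K a b c = a *\<^sub>R mat 1 + b *\<^sub>R K + c *\<^sub>R (K ** K)"

lemma lin_mult:
  assumes K3: "K ** K ** K = - K"
  shows "lin K a b c ** lin K a' b' c' =
    lin K (a*a') (a*b' + b*a' - b*c' - c*b') (a*c' + c*a' + b*b' - c*c')"
proof -
  have k1: "K ** (K ** K) = - K" using K3 by (simp add: matrix_mul_assoc)
  have k2: "(K ** K) ** (K ** K) = - (K ** K)" using K3
    by (metis matrix_mul_assoc mat_neg_left)
  show ?thesis
    unfolding lin_def
    apply (simp only: matrix_add_ldistrib mat_radd mat_sc K3 k1 k2 mat_neg_right mat_neg_left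
        matrix_mul_lid matrix_mul_rid)
    apply (simp add: vec_eq_iff algebra_simps)
    done
qed

lemma lin_eq: "a = a' \<Longrightarrow> b = b' \<Longrightarrow> c = c' \<Longrightarrow> lin K a b c = lin K a' b' c'" by simp

lemma lin_100: "lin K 1 0 0 = mat 1" by (simp add: lin_def)
lemma lin_010: "lin K 0 1 0 = K" by (simp add: lin_def)

lemma mpow_scale: "mpow (t *\<^sub>R K) m = t^m *\<^sub>R mpow K m"
  by (induction m) (simp_all add: mat_sc mult.commute)

lemma mpow_lin:
  assumes K3: "K ** K ** K = - K"
  shows "mpow K m = lin K (if m = 0 then 1 else 0) (fact m * sin_coeff m)
                     (if m = 0 then 0 else - (fact m * cos_coeff m))"
proof (induction m)
  case 0 then show ?case by (simp add: lin_100 sin_coeff_def)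
next
  case (Suc m)
  have "mpow K (Suc m) = mpow K m ** lin K 0 1 0" by (simp add: lin_010)
  also have "\<dots> = lin K 0 ((if m = 0 then 1 else 0) - (if m = 0 then 0 else - (fact m * cos_coeff m)))
                         (fact m * sin_coeff m)"
    unfolding Suc lin_mult[OF K3] by (rule lin_eq) simp_all
  also have "\<dots> = lin K (if Suc m = 0 then 1 else 0) (fact (Suc m) * sin_coeff (Suc m))
                     (if Suc m = 0 then 0 else - (fact (Suc m) * cos_coeff (Suc m)))"
  proof (rule lin_eq)
    show "(if m = 0 then 1 else 0) - (if m = 0 then 0 else - (fact m * cos_coeff m)) =
      fact (Suc m) * sin_coeff (Suc m)"
      by (simp add: sin_coeff_Suc cos_coeff_def)
    show "fact m * sin_coeff m = (if Suc m = 0 then 0 else - (fact (Suc m) * cos_coeff (Suc m)))"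
      by (simp add: cos_coeff_Suc)
  qed simp
  finally show ?case .
qed

definition rod :: "mat3 \<Rightarrow> real \<Rightarrow> mat3" where
  "rod K t = lin K 1 (sin t) (1 - cos t)"

lemma mexp_rod:
  assumes K3: "K ** K ** K = - K"
  shows "mexp (t *\<^sub>R K) = rod K t"
proof -
  have tm: "(1 / fact m) *\<^sub>R mpow (t *\<^sub>R K) m =
     (if m = 0 then 1 else 0) *\<^sub>R mat 1 + (sin_coeff m * t^m) *\<^sub>R K
     + ((if m = 0 then 1 else 0) - cos_coeff m * t^m) *\<^sub>R (K ** K)" for m
    unfolding mpow_scale mpow_lin[OF K3] lin_def
    by (simp add: algebra_simps cos_coeff_def)
  have s1: "(\<lambda>m. (if m = 0 then 1 else 0::real)) sums 1"
    using sums_single[of 0 "\<lambda>_. 1::real"] by simp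
  have s2: "(\<lambda>m. sin_coeff m * t^m) sums sin t" using sin_converges[of t] by simp
  have s3: "(\<lambda>m. (if m = 0 then 1 else 0) - cos_coeff m * t^m) sums (1 - cos t)"
    using sums_diff[OF s1 cos_converges[of t]] by simp
  have "(\<lambda>m. (1 / fact m) *\<^sub>R mpow (t *\<^sub>R K) m) sums
      (1 *\<^sub>R mat 1 + sin t *\<^sub>R K + (1 - cos t) *\<^sub>R (K ** K))"
    unfolding tm
    by (intro sums_add sums_scaleR_left s1 s2 s3)
  then show ?thesis unfolding mexp_def rod_def lin_def by (rule sums_unique[symmetric])
qed

lemma rod_mult:
  assumes K3: "K ** K ** K = - K"
  shows "rod K a ** rod K b = rod K (a + b)"
  unfolding rod_def lin_mult[OF K3]
  by (rule lin_eq) (simp_all add: sin_add cos_add algebra_simps)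

lemma rod_0: "rod K 0 = mat 1" by (simp add: rod_def lin_100)

lemma transpose_lin:
  assumes "transpose K = - K"
  shows "transpose (lin K a b c) = lin K a (-b) c"
  unfolding lin_def using assms
  by (simp add: transpose_add' transpose_scaleR' matrix_transpose_mul mat_neg_left mat_neg_right)

lemma trace_lin:
  assumes "trace K = 0" "trace (K ** K) = -2"
  shows "trace (lin K a b c) = 3 * a - 2 * c"
  unfolding lin_def using assms by (simp add: trace_add trace_scaleR' trace_I)



definition nxt :: "nat \<Rightarrow> nat \<Rightarrow> nat" where "nxt n i = (if i = n then 1 else i + 1)"
definition prv :: "nat \<Rightarrow> nat \<Rightarrow> nat" where "prv n i = (if i = 1 then n else i - 1)"

lemma nxt_in: "3 \<le> n \<Longrightarrow> i \<in> {1..n} \<Longrightarrow> nxt n i \<in> {1..n}" by (auto simp: nxt_def)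
lemma prv_in: "3 \<le> n \<Longrightarrow> i \<in> {1..n} \<Longrightarrow> prv n i \<in> {1..n}" by (auto simp: prv_def)
lemma nxt_prv: "3 \<le> n \<Longrightarrow> i \<in> {1..n} \<Longrightarrow> nxt n (prv n i) = i" by (auto simp: prv_def nxt_def)

definition Q :: "nat \<Rightarrow> (nat \<Rightarrow> mat3) \<Rightarrow> (nat \<Rightarrow> mat3) \<Rightarrow> (nat \<Rightarrow> mat3) \<Rightarrow> real" where
  "Q n M X Y = (\<Sum>i\<in>{1..n}. \<Sum>j\<in>{1..n}. trace (transpose (X i) ** Rblock n M i j ** Y j))"

lemma fcost_Q: "fcost n M R = - Q n M R R" by (simp add: fcost_def Q_def)

lemma transpose_zero': "transpose (0::real^'n^'m) = 0" by (simp add: transpose_def vec_eq_iff)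

lemma Rblock_transpose:
  assumes "3 \<le> n" "i \<in> {1..n}" "j \<in> {1..n}"
  shows "transpose (Rblock n M i j) = Rblock n M j i"
  using assms by (auto simp: Rblock_def transpose_zero')

lemma Q_sym: assumes "3 \<le> n" shows "Q n M X Y = Q n M Y X"
proof -
  have "Q n M X Y = (\<Sum>i\<in>{1..n}. \<Sum>j\<in>{1..n}. trace (transpose (Y j) ** Rblock n M j i ** X i))"
    unfolding Q_def
  proof (intro sum.cong refl)
    fix i j assume i: "i \<in> {1..n}" and j: "j \<in> {1..n}"
    have "trace (transpose (X i) ** Rblock n M i j ** Y j)
        = trace (transpose (transpose (X i) ** Rblock n M i j ** Y j))"
      by (simp add: trace_transpose')
    also have "\<dots> = trace (transpose (Y j) ** Rblock n M j i ** X i)"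
      using Rblock_transpose[OF assms i j]
      by (simp add: matrix_transpose_mul matrix_mul_assoc)
    finally show "trace (transpose (X i) ** Rblock n M i j ** Y j)
        = trace (transpose (Y j) ** Rblock n M j i ** X i)" .
  qed
  also have "\<dots> = Q n M Y X" unfolding Q_def by (rule sum.swap)
  finally show ?thesis .
qed

lemma Rblock_nxt: "3 \<le> n \<Longrightarrow> i \<in> {1..n} \<Longrightarrow> Rblock n M i (nxt n i) = M i"
  by (auto simp: Rblock_def nxt_def)
lemma Rblock_prv: "3 \<le> n \<Longrightarrow> i \<in> {1..n} \<Longrightarrow> Rblock n M i (prv n i) = transpose (M (prv n i))"
  by (auto simp: Rblock_def prv_def)
lemma Rblock_other: "3 \<le> n \<Longrightarrow> i \<in> {1..n} \<Longrightarrow> j \<in> {1..n} \<Longrightarrow> j \<noteq> i \<Longrightarrow>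
   j \<noteq> nxt n i \<Longrightarrow> j \<noteq> prv n i \<Longrightarrow> Rblock n M i j = 0"
  by (auto simp: Rblock_def prv_def nxt_def)

lemma row:
  assumes n3: "3 \<le> n" and i: "i \<in> {1..n}"
  shows "(\<Sum>j\<in>{1..n}. trace (transpose (X i) ** Rblock n M i j ** Y j)) =
    trace (transpose (X i) ** Y i) + trace (transpose (X i) ** M i ** Y (nxt n i))
    + trace (transpose (X i) ** transpose (M (prv n i)) ** Y (prv n i))"
proof -
  have "(\<Sum>j\<in>{1..n}. trace (transpose (X i) ** Rblock n M i j ** Y j)) =
    (\<Sum>j\<in>{1..n}. (if j = i then trace (transpose (X i) ** Y j) else 0)
      + (if j = nxt n i then trace (transpose (X i) ** M i ** Y j) else 0)
      + (if j = prv n i then trace (transpose (X i) ** transpose (M j) ** Y j) else 0))"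
  proof (rule sum.cong[OF refl])
    fix j assume j: "j \<in> {1..n}"
    show "trace (transpose (X i) ** Rblock n M i j ** Y j) =
      (if j = i then trace (transpose (X i) ** Y j) else 0)
      + (if j = nxt n i then trace (transpose (X i) ** M i ** Y j) else 0)
      + (if j = prv n i then trace (transpose (X i) ** transpose (M j) ** Y j) else 0)"
    proof -
      have d1: "nxt n i \<noteq> i" "prv n i \<noteq> i" "nxt n i \<noteq> prv n i"
        using n3 i by (auto simp: nxt_def prv_def)
      consider "j = i" | "j = nxt n i" | "j = prv n i" | "j \<noteq> i" "j \<noteq> nxt n i" "j \<noteq> prv n i"
        by blast
      then show ?thesis
      proof cases
        case 1 then show ?thesis using d1 by (simp add: Rblock_def)
      next
        case 2 then show ?thesis using d1 Rblock_nxt[OF n3 i] by simp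
      next
        case 3 then show ?thesis using d1 Rblock_prv[OF n3 i] by simp
      next
        case 4 then show ?thesis using Rblock_other[OF n3 i j] by (simp add: trace_zero')
      qed
    qed
  qed
  also have "\<dots> = trace (transpose (X i) ** Y i) + trace (transpose (X i) ** M i ** Y (nxt n i))
    + trace (transpose (X i) ** transpose (M (prv n i)) ** Y (prv n i))"
    using i nxt_in[OF n3 i] prv_in[OF n3 i]
    by (simp only: sum.distrib sum.delta finite_atLeastAtMost if_True)
  finally show ?thesis .
qed


lemma quad_term:
  "trace (transpose (A + t *\<^sub>R B) ** (C::mat3) ** (D + t *\<^sub>R E)) =
   trace (transpose A ** C ** D) + t * (trace (transpose B ** C ** D) + trace (transpose A ** C ** E))
   + t^2 * trace (transpose B ** C ** E)"
  apply (simp only: transpose_add' transpose_scaleR' mat_radd matrix_add_ldistrib mat_scl mat_scr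
      trace_add trace_scaleR')
  apply (simp add: algebra_simps power2_eq_square)
  done

lemma Q_quad:
  "Q n M (\<lambda>i. X i + t *\<^sub>R S i) (\<lambda>i. X i + t *\<^sub>R S i) =
   Q n M X X + t * (Q n M S X + Q n M X S) + t^2 * Q n M S S"
  unfolding Q_def quad_term
  by (simp only: sum.distrib sum_distrib_left distrib_left)

lemma skew_zero:
  assumes w: "transpose W = - (W::mat3)"
  shows "trace (transpose W) + trace (transpose W ** A) + trace (transpose W ** transpose A) = 0"
proof -
  have a: "trace (transpose W) = trace W" by (rule trace_transpose')
  have b: "trace (transpose W) = - trace W" unfolding w by (rule trace_neg')
  have t0: "trace (transpose W) = 0" using a b by linarith
  have "trace (transpose W ** transpose A) = trace (transpose (A ** W))"
    by (simp only: matrix_transpose_mul)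
  also have "\<dots> = trace (A ** W)" by (rule trace_transpose')
  also have "\<dots> = trace (W ** A)" by (rule trace_mul_sym)
  finally have e: "trace (transpose W ** transpose A) = trace (W ** A)" .
  have f: "trace (transpose W ** A) = - trace (W ** A)"
    unfolding w mat_neg_left by (rule trace_neg')
  show ?thesis using t0 e f by linarith
qed

lemma SO3_orth: "A \<in> SO3 \<Longrightarrow> transpose A ** A = mat 1" by (simp add: SO3_def)

lemma main_abstract:
  assumes n3: "3 \<le> n"
    and RSO: "\<forall>i\<in>{1..n}. R i \<in> SO3"
    and C: "\<forall>i\<in>{1..n}. transpose (R i) ** M i ** R (nxt n i) = Ek"
  shows "stationary n M R \<and> fcost n M R = - 3 * real n - 2 * real n * trace Ek"
proof -
  have Cb: "transpose (R i) ** transpose (M (prv n i)) ** R (prv n i) = transpose Ek"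
    if i: "i \<in> {1..n}" for i
  proof -
    have "Ek = transpose (R (prv n i)) ** M (prv n i) ** R i"
      using C prv_in[OF n3 i] nxt_prv[OF n3 i] by metis
    then show ?thesis by (simp add: matrix_transpose_mul matrix_mul_assoc)
  qed
  have orth: "transpose (R i) ** R i = mat 1" if "i \<in> {1..n}" for i
    using RSO that SO3_orth by blast
  have val: "Q n M R R = real n * (3 + 2 * trace Ek)"
  proof -
    have "Q n M R R = (\<Sum>i\<in>{1..n}. 3 + 2 * trace Ek)"
      unfolding Q_def
    proof (rule sum.cong[OF refl])
      fix i assume i: "i \<in> {1..n}"
      show "(\<Sum>j\<in>{1..n}. trace (transpose (R i) ** Rblock n M i j ** R j)) = 3 + 2 * trace Ek"
        unfolding row[OF n3 i] using C i Cb[OF i] orth[OF i]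
        by (simp add: trace_I trace_transpose')
    qed
    then show ?thesis by simp
  qed
  have stat: "((\<lambda>t. fcost n M (\<lambda>i. R i + t *\<^sub>R (R i ** \<Omega> i))) has_real_derivative 0) (at 0)"
    if sk: "\<forall>i\<in>{1..n}. skew (\<Omega> i)" for \<Omega>
  proof -
    define S where "S = (\<lambda>i. R i ** \<Omega> i)"
    have QSR: "Q n M S R = 0"
      unfolding Q_def
    proof (rule sum.neutral, rule ballI)
      fix i assume i: "i \<in> {1..n}"
      have w: "transpose (\<Omega> i) = - \<Omega> i" using sk i by (simp add: skew_def)
      have "(\<Sum>j\<in>{1..n}. trace (transpose (S i) ** Rblock n M i j ** R j)) =
         trace (transpose (\<Omega> i) ** (transpose (R i) ** R i))
         + trace (transpose (\<Omega> i) ** (transpose (R i) ** M i ** R (nxt n i)))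
         + trace (transpose (\<Omega> i) ** (transpose (R i) ** transpose (M (prv n i)) ** R (prv n i)))"
        unfolding row[OF n3 i] unfolding S_def by (simp only: matrix_transpose_mul matrix_mul_assoc)
      also have "\<dots> = trace (transpose (\<Omega> i)) + trace (transpose (\<Omega> i) ** Ek)
          + trace (transpose (\<Omega> i) ** transpose Ek)"
        using C i Cb[OF i] orth[OF i] by simp
      also have "\<dots> = 0" by (rule skew_zero[OF w])
      finally show "(\<Sum>j\<in>{1..n}. trace (transpose (S i) ** Rblock n M i j ** R j)) = 0" .
    qed
    have QRS: "Q n M R S = 0" using QSR Q_sym[OF n3] by metis
    have "(\<lambda>t. fcost n M (\<lambda>i. R i + t *\<^sub>R (R i ** \<Omega> i))) =
          (\<lambda>t. - (Q n M R R + t^2 * Q n M S S))"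
      unfolding fcost_Q S_def[symmetric] Q_quad QSR QRS by simp
    moreover have "((\<lambda>t. - (Q n M R R + t^2 * Q n M S S)) has_real_derivative 0) (at 0)"
      by (auto intro!: derivative_eq_intros)
    ultimately show ?thesis by simp
  qed
  show ?thesis
    unfolding stationary_def using RSO stat val fcost_Q[of n M R]
    by (auto simp: algebra_simps)
qed



lemma rod_transpose: "transpose K = - K \<Longrightarrow> transpose (rod K t) = rod K (- t)"
  unfolding rod_def by (simp add: transpose_lin)

lemma rod_orth: "K ** K ** K = - K \<Longrightarrow> transpose K = - K \<Longrightarrow> transpose (rod K t) ** rod K t = mat 1"
  by (simp add: rod_transpose rod_mult rod_0)

lemma rod_det: assumes "K ** K ** K = - K" "transpose K = - K" shows "det (rod K t) = 1"
proof -
  have e: "rod K t = rod K (t/2) ** rod K (t/2)" using rod_mult[OF assms(1)] by simp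
  have "det (transpose (rod K (t/2)) ** rod K (t/2)) = 1" using rod_orth[OF assms] by simp
  then have "det (rod K (t/2)) * det (rod K (t/2)) = 1" by (simp add: det_mul)
  then show ?thesis using e by (simp add: det_mul)
qed

lemma mpow_rod: "K ** K ** K = - K \<Longrightarrow> mpow (rod K t) m = rod K (real m * t)"
  by (induction m) (simp_all add: rod_0 rod_mult algebra_simps)

lemma SO3_right: "A \<in> SO3 \<Longrightarrow> A ** transpose A = mat 1"
  using matrix_left_right_inverse[of "transpose A" A] by (simp add: SO3_def)
lemma SO3_transpose: "A \<in> SO3 \<Longrightarrow> transpose A \<in> SO3"
  using SO3_right[of A] by (simp add: SO3_def)
lemma SO3_mult: "A \<in> SO3 \<Longrightarrow> B \<in> SO3 \<Longrightarrow> A ** B \<in> SO3"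
proof -
  assume a: "A \<in> SO3" and b: "B \<in> SO3"
  have "transpose (A ** B) ** (A ** B) = transpose B ** (transpose A ** A) ** B"
    by (simp add: matrix_transpose_mul matrix_mul_assoc)
  also have "\<dots> = mat 1" using a b by (simp add: SO3_def)
  finally show ?thesis using a b by (simp add: SO3_def det_mul)
qed
lemma SO3_I: "mat 1 \<in> SO3" by (simp add: SO3_def)

lemma lprod_1: "lprod M 1 = mat 1" by (simp add: lprod_def)
lemma lprod_Suc: "1 \<le> i \<Longrightarrow> lprod M (Suc i) = lprod M i ** M i"
  by (simp add: lprod_def)

lemma lprod_SO3:
  assumes "\<forall>s\<in>{1..n}. M s \<in> SO3"
  shows "i \<le> n + 1 \<Longrightarrow> lprod M i \<in> SO3"
proof (induction i)
  case 0 then show ?case by (simp add: lprod_def SO3_I)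
next
  case (Suc i)
  show ?case
  proof (cases "i = 0")
    case True then show ?thesis using lprod_1[of M] SO3_I by simp
  next
    case False
    then have "lprod M (Suc i) = lprod M i ** M i" by (simp add: lprod_Suc)
    moreover have "M i \<in> SO3" using assms False Suc.prems by auto
    ultimately show ?thesis using Suc SO3_mult by simp
  qed
qed


theorem mainTheorem5:
  fixes n :: nat and M :: "nat \<Rightarrow> real^3^3" and nhat :: "real^3" and \<gamma> :: real and k :: nat
  assumes "n \<ge> 3"
    and "\<forall>s\<in>{1..n}. M s \<in> SO3"
    and "norm nhat = 1"
    and "- pi \<le> \<gamma>" and "\<gamma> \<le> pi"
    and "cycle_error n M = mexp (\<gamma> *\<^sub>R hat nhat)"
    and "k < n"
  shows "let Ek = mexp ((\<gamma> / real n - 2 * real k * pi / real n) *\<^sub>R hat nhat);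
             R = (\<lambda>i. if i = 1 then mat 1 else transpose (lprod M i) ** mpow Ek (i - 1))
         in stationary n M R
            \<and> fcost n M R = - 3 * real n - 2 * real n * trace Ek
            \<and> - 3 * real n - 2 * real n * trace Ek
                = - 3 * real n - 2 * real n * (1 + 2 * cos (\<gamma> / real n - 2 * real k * pi / real n))"
proof -
  note n3 = assms(1) and MSO = assms(2)
  define K where "K = hat nhat"
  define \<theta> where "\<theta> = \<gamma> / real n - 2 * real k * pi / real n"
  have K3: "K ** K ** K = - K" unfolding K_def using hat_cube assms(3) .
  have Ks: "transpose K = - K" unfolding K_def by (rule hat_skew)
  define Ek where "Ek = mexp (\<theta> *\<^sub>R K)"
  have Ek: "Ek = rod K \<theta>" unfolding Ek_def by (rule mexp_rod[OF K3])
  define R where "R = (\<lambda>i. if i = 1 then mat 1 else transpose (lprod M i) ** mpow Ek (i - 1))"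
  have pw: "mpow Ek m = rod K (real m * \<theta>)" for m unfolding Ek by (rule mpow_rod[OF K3])
  have ce: "cycle_error n M = rod K \<gamma>" using assms(6) mexp_rod[OF K3] unfolding K_def by simp
  have nt: "real n * \<theta> = \<gamma> - 2 * real k * pi" using n3 unfolding \<theta>_def by (simp add: field_simps)
  have pwn: "mpow Ek n = cycle_error n M"
    unfolding pw nt ce rod_def by (simp add: sin_diff cos_diff)
  have pw_orth: "transpose (mpow Ek m) ** mpow Ek m = mat 1" for m
    unfolding pw by (rule rod_orth[OF K3 Ks])
  have pw_SO: "mpow Ek m \<in> SO3" for m
    using pw_orth rod_det[OF K3 Ks] unfolding SO3_def pw by simp
  have P: "lprod M i \<in> SO3" if "i \<le> n + 1" for i using lprod_SO3[OF MSO that] .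
  have Rf: "R i = transpose (lprod M i) ** mpow Ek (i - 1)" if "1 \<le> i" for i
    using that by (cases "i = 1") (simp_all add: R_def lprod_def)
  have RSO: "\<forall>i\<in>{1..n}. R i \<in> SO3"
    using Rf P pw_SO SO3_mult SO3_transpose by simp
  have C: "\<forall>i\<in>{1..n}. transpose (R i) ** M i ** R (nxt n i) = Ek"
  proof
    fix i assume i: "i \<in> {1..n}"
    have i1: "1 \<le> i" and ni: "i \<le> n" using i by auto
    have pwi: "mpow Ek i = mpow Ek (i - 1) ** Ek"
      using i1 by (metis Suc_diff_1 less_le_trans less_numeral_extra(1) mpow.simps(2) order_refl zero_less_one le_less)
    show "transpose (R i) ** M i ** R (nxt n i) = Ek"
    proof (cases "i = n")
      case False
      then have nx: "nxt n i = Suc i" by (simp add: nxt_def)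
      have Pi: "lprod M (Suc i) = lprod M i ** M i" using i1 by (rule lprod_Suc)
      have "transpose (R i) ** M i ** R (nxt n i) =
          transpose (mpow Ek (i - 1)) ** (lprod M (Suc i) ** transpose (lprod M (Suc i))) ** mpow Ek i"
        using Rf[of "Suc i"] unfolding nx Rf[OF i1] Pi
        by (simp add: matrix_transpose_mul matrix_mul_assoc)
      also have "\<dots> = transpose (mpow Ek (i - 1)) ** mpow Ek i"
        using SO3_right[OF P[of "Suc i"]] False ni by simp
      also have "\<dots> = Ek" unfolding pwi matrix_mul_assoc pw_orth by simp
      finally show ?thesis .
    next
      case True
      have nx: "nxt n i = 1" using True by (simp add: nxt_def)
      have "transpose (R i) ** M i ** R (nxt n i) = transpose (mpow Ek (n - 1)) ** lprod M (Suc n)"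
        unfolding nx Rf[OF i1] True using n3
        by (simp add: R_def nxt_def matrix_transpose_mul matrix_mul_assoc lprod_Suc)
      also have "\<dots> = transpose (mpow Ek (n - 1)) ** mpow Ek n"
        using pwn by (simp add: cycle_error_def)
      also have "\<dots> = Ek" using pwi True by (simp add: matrix_mul_assoc pw_orth)
      finally show ?thesis .
    qed
  qed
  have main: "stationary n M R \<and> fcost n M R = - 3 * real n - 2 * real n * trace Ek"
    by (rule main_abstract[OF n3 RSO C])
  have tr: "trace Ek = 1 + 2 * cos \<theta>"
    unfolding Ek rod_def using trace_lin[of K] trace_hat[of nhat] trace_hat2[OF assms(3)]
    unfolding K_def by simp
  show ?thesis
    unfolding Let_def K_def[symmetric] \<theta>_def[symmetric] Ek_def[symmetric] R_def[symmetric]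
    using main tr by simp
qed


end
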